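(* For $n\geq 2$, the number of 2-Jacobi subsets of $S_n$ equals $2^{(n-1)!\cdot(n-1)}$.
   Context: The left-normed bracket is $[a_1]=a_1$, $[a_1,\dots,a_n]=[[a_1,\dots,a_{n-1}],a_n]$. $S_n$ is the symmetric group on $\{1,\dots,n\}$. A subset $T\subseteq S_n$ is 2-Jacobi if $\sum_{\sigma\in T}[a_{\sigma(1)},\dots,a_{\sigma(n)}]=0$ for all elements $a_1,\dots,a_n$ of every Lie algebra over the field $\mathbb Z/2$. *)

theory Defs
  imports "HOL-Algebra.Ring" "HOL-Combinatorics.Permutations"
begin

text \<open>A Lie algebra over the field Z/2: an abelian group (carrier, addition, zero)
of exponent 2 (i.e. a Z/2-vector space), with a bracket that is closed,
biadditive (= Z/2-bilinear), alternating and satisfies the Jacobi identity.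
The multiplicative part of the ring record is unused.\<close>

definition lie_algebra_Z2 :: "'a ring \<Rightarrow> ('a \<Rightarrow> 'a \<Rightarrow> 'a) \<Rightarrow> bool" where
  "lie_algebra_Z2 R br \<longleftrightarrow>
     abelian_group R \<and>
     (\<forall>x\<in>carrier R. x \<oplus>\<^bsub>R\<^esub> x = \<zero>\<^bsub>R\<^esub>) \<and>
     (\<forall>x\<in>carrier R. \<forall>y\<in>carrier R. br x y \<in> carrier R) \<and>
     (\<forall>x\<in>carrier R. \<forall>y\<in>carrier R. \<forall>z\<in>carrier R.
        br (x \<oplus>\<^bsub>R\<^esub> y) z = br x z \<oplus>\<^bsub>R\<^esub> br y z) \<and>
     (\<forall>x\<in>carrier R. \<forall>y\<in>carrier R. \<forall>z\<in>carrier R.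
        br x (y \<oplus>\<^bsub>R\<^esub> z) = br x y \<oplus>\<^bsub>R\<^esub> br x z) \<and>
     (\<forall>x\<in>carrier R. br x x = \<zero>\<^bsub>R\<^esub>) \<and>
     (\<forall>x\<in>carrier R. \<forall>y\<in>carrier R. \<forall>z\<in>carrier R.
        br (br x y) z \<oplus>\<^bsub>R\<^esub> br (br y z) x \<oplus>\<^bsub>R\<^esub> br (br z x) y = \<zero>\<^bsub>R\<^esub>)"

fun lbracket :: "('a \<Rightarrow> 'a \<Rightarrow> 'a) \<Rightarrow> 'a list \<Rightarrow> 'a" where
  "lbracket br [] = undefined"
| "lbracket br (x # xs) = foldl br x xs"

text \<open>Lie algebras are taken
with carrier a subset of nat; this suffices since the subalgebra generated by
finitely many elements of a Lie algebra over Z/2 is countable.\<close>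
definition two_jacobi :: "nat \<Rightarrow> (nat \<Rightarrow> nat) set \<Rightarrow> bool" where
  "two_jacobi n T \<longleftrightarrow>
     T \<subseteq> {\<sigma>. \<sigma> permutes {1..n}} \<and>
     (\<forall>(R :: nat ring) br. lie_algebra_Z2 R br \<longrightarrow>
        (\<forall>a. (\<forall>i\<in>{1..n}. a i \<in> carrier R) \<longrightarrow>
           finsum R (\<lambda>\<sigma>. lbracket br (map (\<lambda>i. a (\<sigma> i)) [1..<n+1])) T = \<zero>\<^bsub>R\<^esub>))"

end

theory Submission
  imports Defs
begin


definition sd :: "'x set \<Rightarrow> 'x set \<Rightarrow> 'x set" where "sd A B = (A - B) \<union> (B - A)"

lemma mem_sd: "x \<in> sd A B \<longleftrightarrow> (x \<in> A) \<noteq> (x \<in> B)" by (auto simp: sd_def)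
lemma finite_sd: "finite A \<Longrightarrow> finite B \<Longrightarrow> finite (sd A B)" by (simp add: sd_def)

locale lie2 = abelian_group R for R :: "('a, 'b) ring_scheme" (structure) +
  fixes br :: "'a \<Rightarrow> 'a \<Rightarrow> 'a"
  assumes char2: "x \<in> carrier R \<Longrightarrow> x \<oplus> x = \<zero>"
  and br_closed: "x \<in> carrier R \<Longrightarrow> y \<in> carrier R \<Longrightarrow> br x y \<in> carrier R"
  and ladd: "x \<in> carrier R \<Longrightarrow> y \<in> carrier R \<Longrightarrow> z \<in> carrier R \<Longrightarrow> br (x \<oplus> y) z = br x z \<oplus> br y z"
  and radd: "x \<in> carrier R \<Longrightarrow> y \<in> carrier R \<Longrightarrow> z \<in> carrier R \<Longrightarrow> br x (y \<oplus> z) = br x y \<oplus> br x z"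
  and alt: "x \<in> carrier R \<Longrightarrow> br x x = \<zero>"
  and jac: "x \<in> carrier R \<Longrightarrow> y \<in> carrier R \<Longrightarrow> z \<in> carrier R \<Longrightarrow>
        br (br x y) z \<oplus> br (br y z) x \<oplus> br (br z x) y = \<zero>"

lemma lie2I: "lie_algebra_Z2 R br \<Longrightarrow> lie2 R br"
  unfolding lie_algebra_Z2_def lie2_def lie2_axioms_def by blast

context lie2 begin

lemma sum_zero_eq: "x \<in> carrier R \<Longrightarrow> y \<in> carrier R \<Longrightarrow> x \<oplus> y = \<zero> \<Longrightarrow> x = y"
proof -
  assume x: "x \<in> carrier R" and y: "y \<in> carrier R" and e: "x \<oplus> y = \<zero>"
  have "x = x \<oplus> (y \<oplus> y)" using y x by (simp add: char2)
  also have "\<dots> = (x \<oplus> y) \<oplus> y" using x y by (simp add: a_assoc)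
  also have "\<dots> = y" using e y by simp
  finally show ?thesis .
qed

lemma br_comm: "x \<in> carrier R \<Longrightarrow> y \<in> carrier R \<Longrightarrow> br x y = br y x"
proof -
  assume x: "x \<in> carrier R" and y: "y \<in> carrier R"
  have "\<zero> = br (x \<oplus> y) (x \<oplus> y)" using x y by (simp add: alt)
  also have "\<dots> = br x (x \<oplus> y) \<oplus> br y (x \<oplus> y)" using x y by (simp add: ladd)
  also have "\<dots> = (br x x \<oplus> br x y) \<oplus> (br y x \<oplus> br y y)"
    using x y by (simp add: radd)
  also have "\<dots> = br x y \<oplus> br y x" using x y by (simp add: alt br_closed)
  finally have e: "br x y \<oplus> br y x = \<zero>" by (rule sym)
  show ?thesis using sum_zero_eq[OF br_closed[OF x y] br_closed[OF y x] e] .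

qed

lemma br_zero_l: "y \<in> carrier R \<Longrightarrow> br \<zero> y = \<zero>"
proof -
  assume y: "y \<in> carrier R"
  have "br \<zero> y = br (\<zero> \<oplus> \<zero>) y" by simp
  also have "\<dots> = br \<zero> y \<oplus> br \<zero> y" by (rule ladd) (use y in auto)
  also have "\<dots> = \<zero>" using y by (simp add: char2 br_closed)
  finally show ?thesis .
qed

lemma jac2: "x \<in> carrier R \<Longrightarrow> u \<in> carrier R \<Longrightarrow> b \<in> carrier R \<Longrightarrow>
   br x (br u b) = br (br x u) b \<oplus> br (br x b) u"
proof -
  assume x: "x \<in> carrier R" and u: "u \<in> carrier R" and b: "b \<in> carrier R"
  have j: "br (br u b) x \<oplus> br (br b x) u \<oplus> br (br x u) b = \<zero>" using jac[OF u b x] .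
  have "br (br u b) x = br (br b x) u \<oplus> br (br x u) b"
    apply (rule sum_zero_eq)
    using j x u b by (auto simp: br_closed a_assoc)
  then show ?thesis using x u b by (simp add: br_comm[of x "br u b"] br_comm[of b x] br_closed a_comm)
qed

lemma finsum_br: "finite A \<Longrightarrow> f \<in> A \<rightarrow> carrier R \<Longrightarrow> y \<in> carrier R \<Longrightarrow>
   br (finsum R f A) y = finsum R (\<lambda>s. br (f s) y) A"
proof (induction A rule: finite_induct)
  case empty then show ?case by (simp add: br_zero_l)
next
  case (insert x F)
  then show ?case by (simp add: ladd finsum_closed br_closed Pi_def)
qed

lemma foldl_closed: "x \<in> carrier R \<Longrightarrow> set ys \<subseteq> carrier R \<Longrightarrow> foldl br x ys \<in> carrier R"
  by (induction ys arbitrary: x) (auto simp: br_closed)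

lemma finsum_foldl: "finite A \<Longrightarrow> f \<in> A \<rightarrow> carrier R \<Longrightarrow> set ys \<subseteq> carrier R \<Longrightarrow>
   foldl br (finsum R f A) ys = finsum R (\<lambda>s. foldl br (f s) ys) A"
proof (induction ys arbitrary: f)
  case Nil then show ?case by simp
next
  case (Cons y ys)
  have "foldl br (finsum R f A) (y # ys) = foldl br (finsum R (\<lambda>s. br (f s) y) A) ys"
    using Cons.prems by (simp add: finsum_br)
  also have "\<dots> = finsum R (\<lambda>s. foldl br (br (f s) y) ys) A"
    using Cons.prems by (intro Cons.IH) (auto simp: br_closed Pi_def)
  finally show ?case by simp
qed

lemma finsum_sd: "finite A \<Longrightarrow> finite B \<Longrightarrow> f \<in> UNIV \<rightarrow> carrier R \<Longrightarrow>
   finsum R f (sd A B) = finsum R f A \<oplus> finsum R f B"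
proof -
  assume A: "finite A" and B: "finite B" and f: "f \<in> UNIV \<rightarrow> carrier R"
  have fP: "f \<in> X \<rightarrow> carrier R" for X using f by auto
  have e1: "sd A B = (A - B) \<union> (B - A)" by (simp add: sd_def)
  have e2: "A = (A - B) \<union> (A \<inter> B)" by blast
  have e3: "B = (B - A) \<union> (A \<inter> B)" by blast
  let ?a = "finsum R f (A - B)" and ?b = "finsum R f (B - A)" and ?c = "finsum R f (A \<inter> B)"
  have ca: "?a \<in> carrier R" "?b \<in> carrier R" "?c \<in> carrier R" using fP by (auto intro: finsum_closed)
  have "finsum R f (sd A B) = ?a \<oplus> ?b" unfolding e1 using A B fP
    by (intro finsum_Un_disjoint) auto
  moreover have "finsum R f A = ?a \<oplus> ?c"
    using A B fP by (subst e2) (intro finsum_Un_disjoint, auto)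
  moreover have "finsum R f B = ?b \<oplus> ?c"
    using A B fP by (subst e3) (intro finsum_Un_disjoint, auto)
  moreover have "(?a \<oplus> ?c) \<oplus> (?b \<oplus> ?c) = ?a \<oplus> ?b"
  proof -
    have "(?a \<oplus> ?c) \<oplus> (?b \<oplus> ?c) = (?a \<oplus> ?b) \<oplus> (?c \<oplus> ?c)" using ca by (simp add: a_ac)
    then show ?thesis using ca by (simp add: char2)
  qed
  ultimately show ?thesis by simp
qed

end


fun Wr :: "nat list \<Rightarrow> nat list set" where
  "Wr [] = {[]}"
| "Wr [b] = {[b]}"
| "Wr (b # c # r) = sd ((\<lambda>s. s @ [b]) ` Wr (c # r)) ((#) b ` Wr (c # r))"

definition W :: "nat list \<Rightarrow> nat list set" where "W v = Wr (rev v)"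

lemma finite_Wr: "finite (Wr r)"
  by (induction r rule: Wr.induct) (auto simp: finite_sd)

lemma finite_W: "finite (W v)" by (simp add: W_def finite_Wr)

lemma mset_Wr: "s \<in> Wr r \<Longrightarrow> mset s = mset r"
  by (induction r arbitrary: s rule: Wr.induct) (auto simp: mem_sd)

lemma mset_W: "s \<in> W v \<Longrightarrow> mset s = mset v"
  using mset_Wr by (fastforce simp: W_def)

lemma W_single: "W [b] = {[b]}" by (simp add: W_def)

lemma W_snoc: "v \<noteq> [] \<Longrightarrow> W (v @ [b]) = sd ((\<lambda>s. s @ [b]) ` W v) ((#) b ` W v)"
  by (cases "rev v") (auto simp: W_def)

lemma lbracket_snoc: "xs \<noteq> [] \<Longrightarrow> lbracket br (xs @ [y]) = br (lbracket br xs) y"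
  by (cases xs) auto

lemma lbracket_append: "xs \<noteq> [] \<Longrightarrow> lbracket br (xs @ ys) = foldl br (lbracket br xs) ys"
  by (cases xs) auto

context lie2 begin

lemma expand:
  assumes a: "\<And>i. a i \<in> carrier R"
  shows "v \<noteq> [] \<Longrightarrow> x \<in> carrier R \<Longrightarrow>
    br x (lbracket br (map a v)) = finsum R (\<lambda>s. foldl br x (map a s)) (W v)"
proof (induction v arbitrary: x rule: rev_induct)
  case Nil then show ?case by simp
next
  case (snoc b v)
  have fc: "foldl br y (map a s) \<in> carrier R" if "y \<in> carrier R" for y s
    using that a by (intro foldl_closed) auto
  show ?case
  proof (cases "v = []")
    case True
    then show ?thesis using snoc.prems a fc by (simp add: W_single finsum_insert br_closed)
  next
    case False
    have lc: "lbracket br (map a v) \<in> carrier R"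
      using False a by (cases v) (auto intro!: foldl_closed)
    have "br x (lbracket br (map a (v @ [b]))) = br x (br (lbracket br (map a v)) (a b))"
      using False by (simp add: lbracket_snoc)
    also have "\<dots> = br (br x (lbracket br (map a v))) (a b) \<oplus> br (br x (a b)) (lbracket br (map a v))"
      using snoc.prems lc a by (intro jac2) auto
    also have "br (br x (lbracket br (map a v))) (a b) = finsum R (\<lambda>s. foldl br x (map a (s @ [b]))) (W v)"
    proof -
      have "br (br x (lbracket br (map a v))) (a b) = br (finsum R (\<lambda>s. foldl br x (map a s)) (W v)) (a b)"
        using snoc.IH[OF False snoc.prems(2)] by simp
      also have "\<dots> = finsum R (\<lambda>s. br (foldl br x (map a s)) (a b)) (W v)"
        using fc snoc.prems a by (intro finsum_br) (auto simp: finite_W)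
      finally show ?thesis by simp
    qed
    also have "\<dots> = finsum R (\<lambda>s. foldl br x (map a s)) ((\<lambda>s. s @ [b]) ` W v)"
      using fc snoc.prems by (subst finsum_reindex) (auto simp: inj_on_def)
    also have "br (br x (a b)) (lbracket br (map a v)) = finsum R (\<lambda>s. foldl br x (map a s)) ((#) b ` W v)"
    proof -
      have "br (br x (a b)) (lbracket br (map a v)) = finsum R (\<lambda>s. foldl br (br x (a b)) (map a s)) (W v)"
        using snoc.IH[OF False] snoc.prems a br_closed by simp
      also have "\<dots> = finsum R (\<lambda>s. foldl br x (map a s)) ((#) b ` W v)"
        using fc snoc.prems by (subst finsum_reindex) (auto simp: inj_on_def)
      finally show ?thesis .
    qed
    also have "finsum R (\<lambda>s. foldl br x (map a s)) ((\<lambda>s. s @ [b]) ` W v) \<oplus>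
               finsum R (\<lambda>s. foldl br x (map a s)) ((#) b ` W v)
             = finsum R (\<lambda>s. foldl br x (map a s)) (W (v @ [b]))"
      using False fc snoc.prems by (simp add: W_snoc finsum_sd finite_W)
    finally show ?thesis .
  qed
qed

lemma expand_word:
  assumes a: "\<And>i. a i \<in> carrier R" and xs: "xs \<noteq> []"
  shows "lbracket br (map a (xs @ c # ys)) =
         finsum R (\<lambda>u. lbracket br (map a u)) ((\<lambda>s. c # s @ ys) ` W xs)"
proof -
  have fc: "foldl br y (map a s) \<in> carrier R" if "y \<in> carrier R" for y s
    using that a by (intro foldl_closed) auto
  have lc: "lbracket br (map a xs) \<in> carrier R"
    using xs a by (cases xs) (auto intro!: foldl_closed)
  have "lbracket br (map a (xs @ c # ys)) = foldl br (lbracket br (map a (xs @ [c]))) (map a ys)"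
    using xs lbracket_append[of "map a (xs @ [c])" br "map a ys"] by simp
  also have "lbracket br (map a (xs @ [c])) = br (a c) (lbracket br (map a xs))"
    using xs lc a by (simp add: lbracket_snoc br_comm)
  also have "\<dots> = finsum R (\<lambda>s. foldl br (a c) (map a s)) (W xs)"
    using xs a by (intro expand) auto
  also have "foldl br \<dots> (map a ys) = finsum R (\<lambda>s. foldl br (foldl br (a c) (map a s)) (map a ys)) (W xs)"
    using a fc by (intro finsum_foldl) (auto simp: finite_W)
  also have "\<dots> = finsum R (\<lambda>s. lbracket br (map a (c # s @ ys))) (W xs)"
    by simp
  also have "\<dots> = finsum R (\<lambda>u. lbracket br (map a u)) ((\<lambda>s. c # s @ ys) ` W xs)"
    using a fc by (subst finsum_reindex) (auto simp: inj_on_def)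
  finally show ?thesis .
qed

end


definition Wd :: "nat \<Rightarrow> nat list set" where "Wd n = {w. set w \<subseteq> {1..n} \<and> length w \<le> n}"

definition OpC :: "nat \<Rightarrow> (nat list set \<Rightarrow> nat list set) set" where
  "OpC n = {f. (\<forall>A. f A \<subseteq> Wd n) \<and> (\<forall>A B. f (sd A B) = sd (f A) (f B)) \<and> (\<forall>A. f A = f (A \<inter> Wd n))}"

definition Mst :: "nat \<Rightarrow> (nat list set \<Rightarrow> nat list set) ring" where
  "Mst n = \<lparr>carrier = OpC n, monoid.mult = (\<lambda>f g. f), one = (\<lambda>A. {}), zero = (\<lambda>A. {}),
            add = (\<lambda>f g A. sd (f A) (g A))\<rparr>"

definition brM :: "(nat list set \<Rightarrow> nat list set) \<Rightarrow> (nat list set \<Rightarrow> nat list set) \<Rightarrow> (nat list set \<Rightarrow> nat list set)"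
  where "brM f g = (\<lambda>A. sd (f (g A)) (g (f A)))"

definition X :: "nat \<Rightarrow> nat \<Rightarrow> nat list set \<Rightarrow> nat list set" where
  "X n i = (\<lambda>A. (#) i ` {w \<in> A \<inter> Wd n. length w < n})"

lemma finite_Wd: "finite (Wd n)"
proof -
  have "Wd n = {w. set w \<subseteq> {1..n} \<and> length w \<le> n}" by (simp add: Wd_def)
  then show ?thesis using finite_lists_length_le[of "{1..n}" n] by simp
qed

lemma sd_same: "sd A A = {}" by (auto simp: sd_def)
lemma sd_empty: "sd {} A = A" "sd A {} = A" by (auto simp: sd_def)

lemma OpC_empty: "f \<in> OpC n \<Longrightarrow> f {} = {}"
  unfolding OpC_def by (metis (mono_tags, lifting) mem_Collect_eq sd_same)

lemma OpC_D: "f \<in> OpC n \<Longrightarrow> f A \<subseteq> Wd n" "f \<in> OpC n \<Longrightarrow> f (sd A B) = sd (f A) (f B)"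
   "f \<in> OpC n \<Longrightarrow> f (A \<inter> Wd n) = f A"
  unfolding OpC_def by auto


lemma sd_4: "sd (sd a b) (sd c d) = sd (sd a c) (sd b d)"
  by (auto simp: sd_def)
lemma sd_comm: "sd a b = sd b a" by (auto simp: sd_def)
lemma sd_assoc: "sd (sd a b) c = sd a (sd b c)" by (auto simp: sd_def)
lemma sd_jac: "sd (sd (sd (sd p q) (sd r s)) (sd (sd t s) (sd p u))) (sd (sd r u) (sd t q)) = {}"
proof (rule Set.set_eqI)
  fix x show "x \<in> sd (sd (sd (sd p q) (sd r s)) (sd (sd t s) (sd p u))) (sd (sd r u) (sd t q)) \<longleftrightarrow> x \<in> {}"
  unfolding mem_sd empty_iff by argo
qed

lemma add_OpC: "f \<in> OpC n \<Longrightarrow> g \<in> OpC n \<Longrightarrow> (\<lambda>A. sd (f A) (g A)) \<in> OpC n"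
proof -
  assume f: "f \<in> OpC n" and g: "g \<in> OpC n"
  show ?thesis unfolding OpC_def
  proof (intro CollectI conjI allI)
    fix A B
    show "sd (f A) (g A) \<subseteq> Wd n" using OpC_D(1)[OF f] OpC_D(1)[OF g] by (auto simp: sd_def)
    show "sd (f (sd A B)) (g (sd A B)) = sd (sd (f A) (g A)) (sd (f B) (g B))"
      using f g by (simp add: OpC_D(2)) (rule sd_4)
    show "sd (f A) (g A) = sd (f (A \<inter> Wd n)) (g (A \<inter> Wd n))" using f g by (simp add: OpC_D(3))
  qed
qed

lemma br_OpC: "f \<in> OpC n \<Longrightarrow> g \<in> OpC n \<Longrightarrow> brM f g \<in> OpC n"
proof -
  assume f: "f \<in> OpC n" and g: "g \<in> OpC n"
  show ?thesis unfolding OpC_def brM_def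
  proof (intro CollectI conjI allI)
    fix A B
    show "sd (f (g A)) (g (f A)) \<subseteq> Wd n" using OpC_D(1)[OF f] OpC_D(1)[OF g] by (auto simp: sd_def)
    show "sd (f (g (sd A B))) (g (f (sd A B))) = sd (sd (f (g A)) (g (f A))) (sd (f (g B)) (g (f B)))"
      using f g by (simp add: OpC_D(2)) (rule sd_4)
    show "sd (f (g A)) (g (f A)) = sd (f (g (A \<inter> Wd n))) (g (f (A \<inter> Wd n)))"
      using f g by (simp add: OpC_D(3))
  qed
qed

lemma lie_M: "lie_algebra_Z2 (Mst n) brM"
proof -
  have ag: "abelian_group (Mst n)"
  proof (rule abelian_groupI)
    fix x y z assume x: "x \<in> carrier (Mst n)" and y: "y \<in> carrier (Mst n)" and z: "z \<in> carrier (Mst n)"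
    show "x \<oplus>\<^bsub>Mst n\<^esub> y \<in> carrier (Mst n)" using x y by (simp add: Mst_def add_OpC)
    show "x \<oplus>\<^bsub>Mst n\<^esub> y \<oplus>\<^bsub>Mst n\<^esub> z = x \<oplus>\<^bsub>Mst n\<^esub> (y \<oplus>\<^bsub>Mst n\<^esub> z)"
      by (simp add: Mst_def sd_assoc)
    show "x \<oplus>\<^bsub>Mst n\<^esub> y = y \<oplus>\<^bsub>Mst n\<^esub> x" by (simp add: Mst_def sd_comm)
  next
    show "\<zero>\<^bsub>Mst n\<^esub> \<in> carrier (Mst n)" by (simp add: Mst_def OpC_def sd_same)
  next
    fix x assume x: "x \<in> carrier (Mst n)"
    show "\<zero>\<^bsub>Mst n\<^esub> \<oplus>\<^bsub>Mst n\<^esub> x = x" by (simp add: Mst_def sd_empty)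
    show "\<exists>y\<in>carrier (Mst n). y \<oplus>\<^bsub>Mst n\<^esub> x = \<zero>\<^bsub>Mst n\<^esub>"
      using x by (intro bexI[of _ x]) (auto simp: Mst_def sd_same)
  qed
  show ?thesis unfolding lie_algebra_Z2_def
  proof (intro conjI ag ballI)
    fix x y z assume x: "x \<in> carrier (Mst n)" and y: "y \<in> carrier (Mst n)" and z: "z \<in> carrier (Mst n)"
    have x': "x \<in> OpC n" and y': "y \<in> OpC n" and z': "z \<in> OpC n" using x y z by (auto simp: Mst_def)
    show "x \<oplus>\<^bsub>Mst n\<^esub> x = \<zero>\<^bsub>Mst n\<^esub>" by (simp add: Mst_def sd_same)
    show "brM x y \<in> carrier (Mst n)" using x' y' br_OpC by (simp add: Mst_def)
    show "brM x x = \<zero>\<^bsub>Mst n\<^esub>" by (simp add: Mst_def brM_def sd_same)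
    show "brM (x \<oplus>\<^bsub>Mst n\<^esub> y) z = brM x z \<oplus>\<^bsub>Mst n\<^esub> brM y z"
      using z' apply (simp add: Mst_def brM_def OpC_D(2)) by (rule ext, rule sd_4)
    show "brM x (y \<oplus>\<^bsub>Mst n\<^esub> z) = brM x y \<oplus>\<^bsub>Mst n\<^esub> brM x z"
      using x' apply (simp add: Mst_def brM_def OpC_D(2)) by (rule ext, rule sd_4)
    show "brM (brM x y) z \<oplus>\<^bsub>Mst n\<^esub> brM (brM y z) x \<oplus>\<^bsub>Mst n\<^esub> brM (brM z x) y = \<zero>\<^bsub>Mst n\<^esub>"
      using x' y' z' apply (simp add: Mst_def brM_def OpC_D(2)) by (rule ext, rule sd_jac)
  qed
qed



lemma finite_OpC: "finite (OpC n)"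
proof -
  let ?r = "\<lambda>f. restrict f (Pow (Wd n))"
  have inj: "inj_on ?r (OpC n)"
  proof (rule inj_onI)
    fix f g assume f: "f \<in> OpC n" and g: "g \<in> OpC n" and e: "?r f = ?r g"
    show "f = g"
    proof (rule ext)
      fix A
      have "f A = f (A \<inter> Wd n)" using OpC_D(3)[OF f] by simp
      also have "\<dots> = ?r f (A \<inter> Wd n)" by simp
      also have "\<dots> = ?r g (A \<inter> Wd n)" using e by simp
      also have "\<dots> = g A" using OpC_D(3)[OF g] by simp
      finally show "f A = g A" .
    qed
  qed
  have mem: "?r f \<in> (\<Pi>\<^sub>E B \<in> Pow (Wd n). Pow (Wd n))" if "f \<in> OpC n" for f
    using OpC_D(1)[OF that] by (auto simp: PiE_iff)
  have sub: "?r ` OpC n \<subseteq> (\<Pi>\<^sub>E B \<in> Pow (Wd n). Pow (Wd n))"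
    using mem by blast
  have "finite (\<Pi>\<^sub>E B \<in> Pow (Wd n). Pow (Wd n))"
    using finite_Wd by (intro finite_PiE) auto
  then have "finite (?r ` OpC n)" using sub finite_subset by blast
  then show ?thesis using finite_imageD inj by blast
qed

lemma X_OpC: "i \<in> {1..n} \<Longrightarrow> X n i \<in> OpC n"
  unfolding OpC_def X_def
proof (intro CollectI conjI allI)
  fix A B assume i: "i \<in> {1..n}"
  show "(#) i ` {w \<in> A \<inter> Wd n. length w < n} \<subseteq> Wd n" using i by (auto simp: Wd_def)
  show "(#) i ` {w \<in> sd A B \<inter> Wd n. length w < n} =
        sd ((#) i ` {w \<in> A \<inter> Wd n. length w < n}) ((#) i ` {w \<in> B \<inter> Wd n. length w < n})"
    by (auto simp: sd_def)
  show "(#) i ` {w \<in> A \<inter> Wd n. length w < n} = (#) i ` {w \<in> A \<inter> Wd n \<inter> Wd n. length w < n}"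
    by auto
qed

lemma ag_M: "abelian_group (Mst n)"
  using lie_M[of n] unfolding lie_algebra_Z2_def by blast

lemma finsum_M_mem:
  assumes "finite D" "f \<in> D \<rightarrow> OpC n"
  shows "w \<in> finsum (Mst n) f D A \<longleftrightarrow> odd (card {t\<in>D. w \<in> f t A})"
  using assms
proof (induction D rule: finite_induct)
  interpret M: abelian_group "Mst n" by (rule ag_M)
  case empty then show ?case using M.finsum_empty[of f] by (simp add: Mst_def)
next
  interpret M: abelian_group "Mst n" by (rule ag_M)
  case (insert x F)
  have cF: "f \<in> F \<rightarrow> carrier (Mst n)" "f x \<in> carrier (Mst n)" using insert.prems by (auto simp: Mst_def)
  have "finsum (Mst n) f (insert x F) = f x \<oplus>\<^bsub>Mst n\<^esub> finsum (Mst n) f F"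
    using insert.hyps cF by (simp add: M.finsum_insert)
  then have e: "finsum (Mst n) f (insert x F) A = sd (f x A) (finsum (Mst n) f F A)"
    by (simp add: Mst_def)
  have c: "{t\<in>insert x F. w \<in> f t A} = (if w \<in> f x A then insert x {t\<in>F. w \<in> f t A} else {t\<in>F. w \<in> f t A})"
    by auto
  have fin: "finite {t\<in>F. w \<in> f t A}" using insert.hyps by simp
  have cc: "card {t\<in>insert x F. w \<in> f t A} = (if w \<in> f x A then Suc (card {t\<in>F. w \<in> f t A}) else card {t\<in>F. w \<in> f t A})"
    unfolding c using fin insert.hyps by simp
  have IH: "w \<in> finsum (Mst n) f F A \<longleftrightarrow> odd (card {t\<in>F. w \<in> f t A})"
    using insert.IH insert.prems by auto
  show ?case unfolding e mem_sd cc IH by simp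
qed

lemma word_claim:
  assumes "set bs \<subseteq> {2..n}"
  shows "u \<in> Wd n \<Longrightarrow> length u + length bs < n \<Longrightarrow>
    (1 # bs) @ u \<in> foldl brM (X n 1) (map (X n) bs) {u} \<and>
    (\<forall>w \<in> foldl brM (X n 1) (map (X n) bs) {u}. \<exists>p. w = p @ u \<and> p \<noteq> [] \<and> (hd p = 1 \<longrightarrow> p = 1 # bs))"
  using assms
proof (induction bs arbitrary: u rule: rev_induct)
  case Nil
  have "X n 1 {u} = {1 # u}" using Nil by (auto simp: X_def)
  then show ?case by auto
next
  case (snoc b bs)
  let ?P = "foldl brM (X n 1) (map (X n) bs)"
  have b: "b \<in> {2..n}" and bs: "set bs \<subseteq> {2..n}" using snoc.prems by auto
  have Xu: "X n b {u} = {b # u}" using snoc.prems by (auto simp: X_def)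
  have bu: "b # u \<in> Wd n" using snoc.prems b by (auto simp: Wd_def)
  have IH1: "(1 # bs) @ (b # u) \<in> ?P {b # u} \<and>
    (\<forall>w \<in> ?P {b # u}. \<exists>p. w = p @ (b # u) \<and> p \<noteq> [] \<and> (hd p = 1 \<longrightarrow> p = 1 # bs))"
    using snoc.IH[OF bu _ bs] snoc.prems by simp
  have IH2: "\<forall>w \<in> ?P {u}. \<exists>p. w = p @ u \<and> p \<noteq> [] \<and> (hd p = 1 \<longrightarrow> p = 1 # bs)"
    using snoc.IH[OF snoc.prems(1) _ bs] snoc.prems by simp
  have eq: "foldl brM (X n 1) (map (X n) (bs @ [b])) {u} = sd (?P {b # u}) (X n b (?P {u}))"
    by (simp add: brM_def Xu)
  have Xb: "\<forall>w \<in> X n b S. \<exists>w'. w = b # w' \<and> w' \<in> S" for S by (auto simp: X_def)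
  have b1: "b \<noteq> 1" using b by auto
  show ?case
  proof
    show "(1 # bs @ [b]) @ u \<in> foldl brM (X n 1) (map (X n) (bs @ [b])) {u}"
      unfolding eq mem_sd using IH1 Xb b1 by fastforce
  next
    show "\<forall>w\<in>foldl brM (X n 1) (map (X n) (bs @ [b])) {u}. \<exists>p. w = p @ u \<and> p \<noteq> [] \<and> (hd p = 1 \<longrightarrow> p = 1 # bs @ [b])"
    proof
      fix w assume "w \<in> foldl brM (X n 1) (map (X n) (bs @ [b])) {u}"
      then have "w \<in> ?P {b # u} \<or> w \<in> X n b (?P {u})" unfolding eq mem_sd by blast
      then show "\<exists>p. w = p @ u \<and> p \<noteq> [] \<and> (hd p = 1 \<longrightarrow> p = 1 # bs @ [b])"
      proof
        assume "w \<in> ?P {b # u}"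
        then obtain p where p: "w = p @ (b # u)" "p \<noteq> []" "hd p = 1 \<longrightarrow> p = 1 # bs" using IH1 by blast
        show ?thesis using p by (intro exI[of _ "p @ [b]"]) auto
      next
        assume "w \<in> X n b (?P {u})"
        then obtain w' where w': "w = b # w'" "w' \<in> ?P {u}" using Xb by blast
        then obtain p where p: "w' = p @ u" using IH2 by blast
        show ?thesis using w' p b1 by (intro exI[of _ "b # p"]) auto
      qed
    qed
  qed
qed



definition trR :: "'b ring \<Rightarrow> ('b \<Rightarrow> nat) \<Rightarrow> nat ring" where
  "trR M h = \<lparr>carrier = h ` carrier M, monoid.mult = (\<lambda>x y. x), one = h \<zero>\<^bsub>M\<^esub>, zero = h \<zero>\<^bsub>M\<^esub>,
     add = (\<lambda>x y. h (inv_into (carrier M) h x \<oplus>\<^bsub>M\<^esub> inv_into (carrier M) h y))\<rparr>"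

definition trB :: "'b ring \<Rightarrow> ('b \<Rightarrow> nat) \<Rightarrow> ('b \<Rightarrow> 'b \<Rightarrow> 'b) \<Rightarrow> nat \<Rightarrow> nat \<Rightarrow> nat" where
  "trB M h br = (\<lambda>x y. h (br (inv_into (carrier M) h x) (inv_into (carrier M) h y)))"

lemma tr_lie:
  assumes L: "lie_algebra_Z2 M br" and h: "inj_on h (carrier M)"
  shows "lie_algebra_Z2 (trR M h) (trB M h br)"
proof -
  interpret M: lie2 M br by (rule lie2I[OF L])
  have cr: "carrier (trR M h) = h ` carrier M" by (simp add: trR_def)
  have ad: "x \<in> carrier M \<Longrightarrow> y \<in> carrier M \<Longrightarrow> h x \<oplus>\<^bsub>trR M h\<^esub> h y = h (x \<oplus>\<^bsub>M\<^esub> y)" for x y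
    using h by (simp add: trR_def)
  have bb: "x \<in> carrier M \<Longrightarrow> y \<in> carrier M \<Longrightarrow> trB M h br (h x) (h y) = h (br x y)" for x y
    using h by (simp add: trB_def)
  have z: "\<zero>\<^bsub>trR M h\<^esub> = h \<zero>\<^bsub>M\<^esub>" by (simp add: trR_def)
  have ag: "abelian_group (trR M h)"
  proof (rule abelian_groupI, simp_all only: cr z)
    show "\<And>x y. x \<in> h ` carrier M \<Longrightarrow> y \<in> h ` carrier M \<Longrightarrow> x \<oplus>\<^bsub>trR M h\<^esub> y \<in> h ` carrier M"
      by (auto simp: ad)
    show "h \<zero>\<^bsub>M\<^esub> \<in> h ` carrier M" by simp
    show "\<And>x y z. x \<in> h ` carrier M \<Longrightarrow> y \<in> h ` carrier M \<Longrightarrow> z \<in> h ` carrier M \<Longrightarrow>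
       x \<oplus>\<^bsub>trR M h\<^esub> y \<oplus>\<^bsub>trR M h\<^esub> z = x \<oplus>\<^bsub>trR M h\<^esub> (y \<oplus>\<^bsub>trR M h\<^esub> z)"
      by (auto simp: ad M.a_assoc)
    show "\<And>x y. x \<in> h ` carrier M \<Longrightarrow> y \<in> h ` carrier M \<Longrightarrow> x \<oplus>\<^bsub>trR M h\<^esub> y = y \<oplus>\<^bsub>trR M h\<^esub> x"
      by (auto simp: ad M.a_comm)
    show "\<And>x. x \<in> h ` carrier M \<Longrightarrow> h \<zero>\<^bsub>M\<^esub> \<oplus>\<^bsub>trR M h\<^esub> x = x"
      by (auto simp: ad)
    show "\<And>x. x \<in> h ` carrier M \<Longrightarrow> \<exists>y\<in>h ` carrier M. y \<oplus>\<^bsub>trR M h\<^esub> x = h \<zero>\<^bsub>M\<^esub>"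
      by (auto simp: ad M.char2 intro!: bexI)
  qed
  show ?thesis unfolding lie_algebra_Z2_def cr z
  proof (intro conjI ag ballI)
    fix x y w assume "x \<in> h ` carrier M" "y \<in> h ` carrier M" "w \<in> h ` carrier M"
    then obtain x0 y0 w0 where e: "x = h x0" "y = h y0" "w = h w0" and
      c: "x0 \<in> carrier M" "y0 \<in> carrier M" "w0 \<in> carrier M" by blast
    show "x \<oplus>\<^bsub>trR M h\<^esub> x = h \<zero>\<^bsub>M\<^esub>" using c by (simp add: e ad M.char2)
    show "trB M h br x y \<in> h ` carrier M" using c by (simp add: e bb M.br_closed)
    show "trB M h br (x \<oplus>\<^bsub>trR M h\<^esub> y) w = trB M h br x w \<oplus>\<^bsub>trR M h\<^esub> trB M h br y w"
      using c by (simp add: e ad bb M.br_closed M.ladd)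
    show "trB M h br x (y \<oplus>\<^bsub>trR M h\<^esub> w) = trB M h br x y \<oplus>\<^bsub>trR M h\<^esub> trB M h br x w"
      using c by (simp add: e ad bb M.br_closed M.radd)
    show "trB M h br x x = h \<zero>\<^bsub>M\<^esub>" using c by (simp add: e bb M.alt)
  next
    fix x y w assume "x \<in> h ` carrier M" "y \<in> h ` carrier M" "w \<in> h ` carrier M"
    then obtain x0 y0 w0 where e: "x = h x0" "y = h y0" "w = h w0" and
      c: "x0 \<in> carrier M" "y0 \<in> carrier M" "w0 \<in> carrier M" by blast
    show "trB M h br (trB M h br x y) w \<oplus>\<^bsub>trR M h\<^esub> trB M h br (trB M h br y w) x \<oplus>\<^bsub>trR M h\<^esub>
          trB M h br (trB M h br w x) y = h \<zero>\<^bsub>M\<^esub>"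
      using c by (simp add: e ad bb M.br_closed M.jac)
  qed
qed

lemma tr_finsum:
  assumes L: "lie_algebra_Z2 M br" and h: "inj_on h (carrier M)"
  shows "finite D \<Longrightarrow> f \<in> D \<rightarrow> carrier M \<Longrightarrow> finsum (trR M h) (\<lambda>t. h (f t)) D = h (finsum M f D)"
proof (induction D rule: finite_induct)
  interpret M: lie2 M br by (rule lie2I[OF L])
  interpret T: lie2 "trR M h" "trB M h br" by (rule lie2I[OF tr_lie[OF L h]])
  case empty then show ?case using T.finsum_empty by (simp add: trR_def)
next
  interpret M: lie2 M br by (rule lie2I[OF L])
  interpret T: lie2 "trR M h" "trB M h br" by (rule lie2I[OF tr_lie[OF L h]])
  case (insert x F)
  have c: "(\<lambda>t. h (f t)) \<in> F \<rightarrow> carrier (trR M h)" "h (f x) \<in> carrier (trR M h)"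
    using insert.prems by (auto simp: trR_def)
  have "finsum (trR M h) (\<lambda>t. h (f t)) (insert x F) = h (f x) \<oplus>\<^bsub>trR M h\<^esub> finsum (trR M h) (\<lambda>t. h (f t)) F"
    using insert.hyps c by (simp add: T.finsum_insert)
  also have "\<dots> = h (f x) \<oplus>\<^bsub>trR M h\<^esub> h (finsum M f F)" using insert by simp
  also have "\<dots> = h (f x \<oplus>\<^bsub>M\<^esub> finsum M f F)"
    using h insert.prems by (simp add: trR_def M.finsum_closed)
  also have "\<dots> = h (finsum M f (insert x F))"
    using insert.hyps insert.prems by (simp add: M.finsum_insert)
  finally show ?case .
qed

lemma tr_foldl:
  assumes L: "lie_algebra_Z2 M br" and h: "inj_on h (carrier M)"
  shows "x \<in> carrier M \<Longrightarrow> set ys \<subseteq> carrier M \<Longrightarrow> foldl (trB M h br) (h x) (map h ys) = h (foldl br x ys)"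
proof (induction ys arbitrary: x)
  interpret M: lie2 M br by (rule lie2I[OF L])
  case Nil then show ?case by simp
next
  interpret M: lie2 M br by (rule lie2I[OF L])
  case (Cons y ys)
  then show ?case using h by (simp add: trB_def M.br_closed)
qed



definition Lset :: "nat \<Rightarrow> (nat \<Rightarrow> nat) set" where
  "Lset n = {\<sigma>. \<sigma> permutes {1..n} \<and> \<sigma> 1 = 1}"

lemma wd_inj:
  assumes "\<sigma> permutes {1..n}" "\<tau> permutes {1..n}" "map \<sigma> [1..<n+1] = map \<tau> [1..<n+1]"
  shows "\<sigma> = \<tau>"
proof (rule ext)
  fix i show "\<sigma> i = \<tau> i"
  proof (cases "i \<in> {1..n}")
    case True
    then have "i \<in> set [1..<n+1]" by auto
    then show ?thesis using assms(3) by (metis map_eq_conv)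
  next
    case False then show ?thesis using assms(1,2) by (simp add: permutes_not_in)
  qed
qed

lemma upt_1: "n \<ge> 1 \<Longrightarrow> [1..<n+1] = 1 # [2..<n+1]"
proof -
  assume "n \<ge> 1"
  then have "1 < n + 1" by simp
  from upt_conv_Cons[OF this] show ?thesis by (simp only: Suc_1)
qed

lemma L_tail:
  assumes "\<tau> \<in> Lset n"
  shows "set (map \<tau> [2..<n+1]) \<subseteq> {2..n}"
proof
  fix j assume "j \<in> set (map \<tau> [2..<n+1])"
  then obtain i where i0: "i \<in> set [2..<n+1]" "j = \<tau> i" by auto
  then have i: "i \<in> {2..n}" "j = \<tau> i" by auto
  have p: "\<tau> permutes {1..n}" and t1: "\<tau> 1 = 1" using assms by (auto simp: Lset_def)
  have "j \<in> {1..n}" using i permutes_in_image[OF p] by auto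
  moreover have "j \<noteq> 1"
  proof
    assume "j = 1"
    then have "\<tau> i = \<tau> 1" using i t1 by simp
    then have "i = 1" using permutes_inj[OF p] by (simp add: inj_eq)
    then show False using i by simp
  qed
  ultimately show "j \<in> {2..n}" by auto
qed

lemma model:
  assumes n: "n \<ge> 2"
  shows "\<exists>(R :: nat ring) br a. lie_algebra_Z2 R br \<and> (\<forall>i\<in>{1..n}. a i \<in> carrier R) \<and>
     (\<forall>D. D \<subseteq> Lset n \<longrightarrow> D \<noteq> {} \<longrightarrow>
        finsum R (\<lambda>\<tau>. lbracket br (map (\<lambda>i. a (\<tau> i)) [1..<n+1])) D \<noteq> \<zero>\<^bsub>R\<^esub>)"
proof -
  obtain h :: "(nat list set \<Rightarrow> nat list set) \<Rightarrow> nat" and m where h0: "h ` OpC n = {i. i < m} \<and> inj_on h (OpC n)"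
    using finite_imp_inj_to_nat_seg[OF finite_OpC] by blast
  have cM: "carrier (Mst n) = OpC n" by (simp add: Mst_def)
  have h: "inj_on h (carrier (Mst n))" using h0 cM by simp
  have LM: "lie_algebra_Z2 (Mst n) brM" by (rule lie_M)
  interpret M: lie2 "Mst n" brM by (rule lie2I[OF LM])
  define R where "R = trR (Mst n) h"
  define br where "br = trB (Mst n) h brM"
  define a where "a = (\<lambda>i. h (X n i))"
  define EM where "EM = (\<lambda>\<tau>::nat\<Rightarrow>nat. lbracket brM (map (\<lambda>i. X n (\<tau> i)) [1..<n+1]))"
  have LR: "lie_algebra_Z2 R br" unfolding R_def br_def by (rule tr_lie[OF LM h])
  interpret T: lie2 R br by (rule lie2I[OF LR])
  have cR: "carrier R = h ` OpC n" by (simp add: R_def trR_def cM)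
  have Xc: "i \<in> {1..n} \<Longrightarrow> X n i \<in> carrier (Mst n)" for i using X_OpC cM by simp
  have ac: "\<forall>i\<in>{1..n}. a i \<in> carrier R" unfolding a_def cR using X_OpC by blast
  have n1: "[1..<n+1] = 1 # [2..<n+1]" by (rule upt_1) (use n in simp)
  have perm_in: "\<tau> permutes {1..n} \<Longrightarrow> i \<in> {1..n} \<Longrightarrow> \<tau> i \<in> {1..n}" for \<tau> i
    using permutes_in_image[of \<tau> "{1..n}" i] by blast
  have Xtc: "X n (\<tau> i) \<in> carrier (Mst n)" if "\<tau> permutes {1..n}" "i \<in> {1..n}" for \<tau> i
    using Xc[OF perm_in[OF that]] .
  have setc: "set (map (\<lambda>i. X n (\<tau> i)) [2..<n+1]) \<subseteq> carrier (Mst n)" if "\<tau> permutes {1..n}" for \<tau>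
  proof
    fix x assume "x \<in> set (map (\<lambda>i. X n (\<tau> i)) [2..<n+1])"
    then obtain i where "i \<in> set [2..<n+1]" "x = X n (\<tau> i)" by auto
    then show "x \<in> carrier (Mst n)" using Xtc[OF that, of i] by (simp del: upt_Suc)
  qed
  have EMc: "EM \<tau> \<in> carrier (Mst n)" if "\<tau> permutes {1..n}" for \<tau>
    unfolding EM_def n1 lbracket.simps list.map
  proof (rule M.foldl_closed)
    show "X n (\<tau> 1) \<in> carrier (Mst n)" using Xtc[OF that, of 1] n by simp
    show "set (map (\<lambda>i. X n (\<tau> i)) [2..<n+1]) \<subseteq> carrier (Mst n)" by (rule setc[OF that])
  qed
  have Eeq: "lbracket br (map (\<lambda>i. a (\<tau> i)) [1..<n+1]) = h (EM \<tau>)" if "\<tau> permutes {1..n}" for \<tau>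
  proof -
    have "lbracket br (map (\<lambda>i. a (\<tau> i)) [1..<n+1]) =
          foldl (trB (Mst n) h brM) (h (X n (\<tau> 1))) (map h (map (\<lambda>i. X n (\<tau> i)) [2..<n+1]))"
      unfolding n1 by (simp add: br_def a_def comp_def del: upt_Suc)
    also have "\<dots> = h (foldl brM (X n (\<tau> 1)) (map (\<lambda>i. X n (\<tau> i)) [2..<n+1]))"
      using that n Xtc[OF that, of 1] setc[OF that] by (intro tr_foldl[OF LM h]) auto
    also have "\<dots> = h (EM \<tau>)" unfolding EM_def n1 by (simp del: upt_Suc)
    finally show ?thesis .
  qed
  have claim: "D \<subseteq> Lset n \<longrightarrow> D \<noteq> {} \<longrightarrow>
        finsum R (\<lambda>\<tau>. lbracket br (map (\<lambda>i. a (\<tau> i)) [1..<n+1])) D \<noteq> \<zero>\<^bsub>R\<^esub>" for D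
  proof (intro impI notI)
    assume DL: "D \<subseteq> Lset n" and Dne: "D \<noteq> {}" and eq0: "finsum R (\<lambda>\<tau>. lbracket br (map (\<lambda>i. a (\<tau> i)) [1..<n+1])) D = \<zero>\<^bsub>R\<^esub>"
    have Dp: "\<tau> \<in> D \<Longrightarrow> \<tau> permutes {1..n}" for \<tau> using DL by (auto simp: Lset_def)
    have finD: "finite D"
      using finite_subset[OF _ finite_permutations[of "{1..n}"]] Dp by blast
    have "finsum R (\<lambda>\<tau>. lbracket br (map (\<lambda>i. a (\<tau> i)) [1..<n+1])) D = finsum R (\<lambda>\<tau>. h (EM \<tau>)) D"
      using Dp Eeq EMc cR cM by (intro T.finsum_cong') auto
    also have "\<dots> = h (finsum (Mst n) EM D)"
      unfolding R_def using finD EMc Dp by (intro tr_finsum[OF LM h]) auto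
    finally have "h (finsum (Mst n) EM D) = h \<zero>\<^bsub>Mst n\<^esub>" using eq0 by (simp add: R_def trR_def)
    then have S0: "finsum (Mst n) EM D = \<zero>\<^bsub>Mst n\<^esub>"
    proof (rule inj_onD[OF h])
      show "finsum (Mst n) EM D \<in> carrier (Mst n)" using EMc Dp by (intro M.finsum_closed) auto
    qed simp_all
    obtain \<tau>0 where t0: "\<tau>0 \<in> D" using Dne by blast
    define bs where "bs = (\<lambda>\<tau>::nat\<Rightarrow>nat. map \<tau> [2..<n+1])"
    have EMbs: "EM \<tau> = foldl brM (X n 1) (map (X n) (bs \<tau>))" if "\<tau> \<in> D" for \<tau>
    proof -
      have "\<tau> 1 = 1" using that DL by (auto simp: Lset_def)
      then show ?thesis unfolding EM_def n1 bs_def by (simp add: comp_def del: upt_Suc)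
    qed
    have wc: "(1 # bs \<tau>) @ [] \<in> EM \<tau> {[]} \<and>
      (\<forall>w \<in> EM \<tau> {[]}. \<exists>p. w = p @ [] \<and> p \<noteq> [] \<and> (hd p = 1 \<longrightarrow> p = 1 # bs \<tau>))" if "\<tau> \<in> D" for \<tau>
      unfolding EMbs[OF that] using n L_tail[of \<tau> n] that DL
      by (intro word_claim) (auto simp: bs_def Wd_def simp del: upt_Suc)
    have single: "{t\<in>D. 1 # bs \<tau>0 \<in> EM t {[]}} = {\<tau>0}"
    proof
      show "{\<tau>0} \<subseteq> {t\<in>D. 1 # bs \<tau>0 \<in> EM t {[]}}" using wc[OF t0] t0 by simp
      show "{t\<in>D. 1 # bs \<tau>0 \<in> EM t {[]}} \<subseteq> {\<tau>0}"
      proof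
        fix t assume "t \<in> {t\<in>D. 1 # bs \<tau>0 \<in> EM t {[]}}"
        then have tD: "t \<in> D" and w: "1 # bs \<tau>0 \<in> EM t {[]}" by auto
        then have "1 # bs \<tau>0 = 1 # bs t" using wc[OF tD] by fastforce
        then have "map t [1..<n+1] = map \<tau>0 [1..<n+1]"
        proof -
          have "t 1 = 1" "\<tau>0 1 = 1" using tD t0 DL by (auto simp: Lset_def)
          then show ?thesis using \<open>1 # bs \<tau>0 = 1 # bs t\<close> unfolding n1 bs_def by (simp del: upt_Suc)
        qed
        then have "t = \<tau>0" using wd_inj Dp tD t0 by blast
        then show "t \<in> {\<tau>0}" by simp
      qed
    qed
    have "1 # bs \<tau>0 \<in> finsum (Mst n) EM D {[]}"
      using finD EMc Dp cM single by (subst finsum_M_mem) auto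
    then show False using S0 by (simp add: Mst_def)
  qed
  show ?thesis using LR ac claim by blast
qed



definition wd :: "nat \<Rightarrow> (nat \<Rightarrow> nat) \<Rightarrow> nat list" where "wd n \<sigma> = map \<sigma> [1..<n+1]"
definition Sw :: "nat \<Rightarrow> (nat \<Rightarrow> nat) \<Rightarrow> nat list set" where
  "Sw n \<sigma> = (\<lambda>s. 1 # s @ tl (dropWhile (\<lambda>x. x \<noteq> 1) (wd n \<sigma>))) ` W (takeWhile (\<lambda>x. x \<noteq> 1) (wd n \<sigma>))"
definition cc :: "nat \<Rightarrow> (nat \<Rightarrow> nat) \<Rightarrow> (nat \<Rightarrow> nat) set" where
  "cc n \<sigma> = (if \<sigma> \<in> Lset n then {\<sigma>} else {\<tau> \<in> Lset n. wd n \<tau> \<in> Sw n \<sigma>})"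
definition CC :: "nat \<Rightarrow> (nat \<Rightarrow> nat) set \<Rightarrow> (nat \<Rightarrow> nat) set" where
  "CC n T = {\<tau> \<in> Lset n. odd (card {\<sigma>\<in>T. \<tau> \<in> cc n \<sigma>})}"

lemma wd_props:
  assumes "\<sigma> permutes {1..n}"
  shows "distinct (wd n \<sigma>)" "set (wd n \<sigma>) = {1..n}" "length (wd n \<sigma>) = n"
proof -
  have inj: "inj_on \<sigma> (set [1..<n+1])" using permutes_inj[OF assms] by (auto intro: inj_on_subset)
  show "distinct (wd n \<sigma>)" unfolding wd_def using inj by (simp add: distinct_map)
  have "\<sigma> ` {1..n} = {1..n}" using permutes_image[OF assms] .
  moreover have "set [1..<n+1] = {1..n}" by auto
  ultimately show "set (wd n \<sigma>) = {1..n}" unfolding wd_def by simp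
  show "length (wd n \<sigma>) = n" by (simp add: wd_def)
qed

lemma perm_of_word:
  assumes "distinct u" "set u = {1..n}" "length u = n"
  shows "\<exists>\<tau>. \<tau> permutes {1..n} \<and> wd n \<tau> = u"
proof -
  define \<tau> where "\<tau> = (\<lambda>i. if i \<in> {1..n} then u ! (i - 1) else i)"
  have w: "wd n \<tau> = u"
  proof (rule nth_equalityI)
    show "length (wd n \<tau>) = length u" using assms by (simp add: wd_def)
    fix k assume "k < length (wd n \<tau>)"
    then have k: "k < n" by (simp add: wd_def del: upt_Suc)
    then have "[1..<n+1] ! k = k + 1" by (simp del: upt_Suc)
    then show "wd n \<tau> ! k = u ! k" using k by (simp add: wd_def \<tau>_def del: upt_Suc)
  qed
  have img: "\<tau> ` {1..n} = {1..n}"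
  proof -
    have "\<tau> ` {1..n} = set (wd n \<tau>)"
    proof -
      have "set [1..<n+1] = {1..n}" by auto
      then show ?thesis by (simp add: wd_def)
    qed
    then show ?thesis using w assms by simp
  qed
  have "inj_on \<tau> {1..n}"
  proof (rule eq_card_imp_inj_on)
    show "finite {1..n}" by simp
    show "card (\<tau> ` {1..n}) = card {1..n}" using img by simp
  qed
  then have "bij_betw \<tau> {1..n} {1..n}" using img by (simp add: bij_betw_def)
  then have "\<tau> permutes {1..n}" by (rule bij_imp_permutes) (auto simp: \<tau>_def)
  then show ?thesis using w by blast
qed

lemma split1:
  assumes "\<sigma> permutes {1..n}" "n \<ge> 1" "\<sigma> 1 \<noteq> 1"
  defines "xs \<equiv> takeWhile (\<lambda>x. x \<noteq> 1) (wd n \<sigma>)" and "ys \<equiv> tl (dropWhile (\<lambda>x. x \<noteq> 1) (wd n \<sigma>))"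
  shows "wd n \<sigma> = xs @ 1 # ys" "xs \<noteq> []"
proof -
  have "1 \<in> set (wd n \<sigma>)" using wd_props(2)[OF assms(1)] assms(2) by auto
  then have ne: "dropWhile (\<lambda>x. x \<noteq> 1) (wd n \<sigma>) \<noteq> []" by (simp add: dropWhile_eq_Nil_conv)
  then have "hd (dropWhile (\<lambda>x. x \<noteq> 1) (wd n \<sigma>)) = 1" using hd_dropWhile[OF ne] by simp
  then have "dropWhile (\<lambda>x. x \<noteq> 1) (wd n \<sigma>) = 1 # ys" using ne unfolding ys_def by (cases "dropWhile (\<lambda>x. x \<noteq> 1) (wd n \<sigma>)") auto
  moreover have "wd n \<sigma> = takeWhile (\<lambda>x. x \<noteq> 1) (wd n \<sigma>) @ dropWhile (\<lambda>x. x \<noteq> 1) (wd n \<sigma>)"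
    by (rule takeWhile_dropWhile_id[symmetric])
  ultimately show e: "wd n \<sigma> = xs @ 1 # ys" unfolding xs_def by simp
  have "wd n \<sigma> = \<sigma> 1 # map \<sigma> [2..<n+1]" using upt_1[OF assms(2)] by (simp add: wd_def)
  then show "xs \<noteq> []" using e assms(3) by (cases xs) auto
qed

lemma Sw_words:
  assumes "\<sigma> permutes {1..n}" "n \<ge> 1" "\<sigma> 1 \<noteq> 1" "u \<in> Sw n \<sigma>"
  shows "\<exists>\<tau>\<in>Lset n. wd n \<tau> = u"
proof -
  let ?xs = "takeWhile (\<lambda>x. x \<noteq> 1) (wd n \<sigma>)" and ?ys = "tl (dropWhile (\<lambda>x. x \<noteq> 1) (wd n \<sigma>))"
  obtain s where s: "s \<in> W ?xs" "u = 1 # s @ ?ys" using assms(4) unfolding Sw_def by blast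
  have "mset u = mset (?xs @ 1 # ?ys)" using mset_W[OF s(1)] s(2) by simp
  moreover have e: "wd n \<sigma> = ?xs @ 1 # ?ys" by (rule split1(1)[OF assms(1-3)])
  ultimately have mu: "mset u = mset (wd n \<sigma>)" by (simp only: e[symmetric])
  have "distinct u" using mset_eq_imp_distinct_iff[OF mu] wd_props(1)[OF assms(1)] by simp
  moreover have "set u = {1..n}" using mu wd_props(2)[OF assms(1)] by (metis set_mset_mset)
  moreover have "length u = n" using mu wd_props(3)[OF assms(1)] by (metis size_mset)
  ultimately obtain \<tau> where t: "\<tau> permutes {1..n}" "wd n \<tau> = u" using perm_of_word by blast
  have "wd n \<tau> = \<tau> 1 # map \<tau> [2..<n+1]" using upt_1[OF assms(2)] by (simp add: wd_def)
  then have "\<tau> 1 = 1" using t s(2) by simp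
  then show ?thesis using t by (auto simp: Lset_def)
qed

lemma wd_image_cc:
  assumes "\<sigma> permutes {1..n}" "n \<ge> 1" "\<sigma> \<notin> Lset n"
  shows "wd n ` cc n \<sigma> = Sw n \<sigma>" "inj_on (wd n) (cc n \<sigma>)"
proof -
  have s1: "\<sigma> 1 \<noteq> 1" using assms by (auto simp: Lset_def)
  have ccd: "cc n \<sigma> = {\<tau> \<in> Lset n. wd n \<tau> \<in> Sw n \<sigma>}" using assms(3) by (simp add: cc_def)
  show "wd n ` cc n \<sigma> = Sw n \<sigma>"
  proof
    show "wd n ` cc n \<sigma> \<subseteq> Sw n \<sigma>" unfolding ccd by auto
    show "Sw n \<sigma> \<subseteq> wd n ` cc n \<sigma>"
    proof
      fix u assume u: "u \<in> Sw n \<sigma>"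
      then obtain \<tau> where "\<tau> \<in> Lset n" "wd n \<tau> = u" using Sw_words[OF assms(1,2) s1] by blast
      then show "u \<in> wd n ` cc n \<sigma>" unfolding ccd using u by (intro image_eqI[of _ _ \<tau>]) auto
    qed
  qed
  show "inj_on (wd n) (cc n \<sigma>)"
  proof (rule inj_onI)
    fix x y assume "x \<in> cc n \<sigma>" "y \<in> cc n \<sigma>" "wd n x = wd n y"
    then show "x = y" using wd_inj[of x n y] unfolding ccd Lset_def wd_def by blast
  qed
qed

lemma cc_sub: "cc n \<sigma> \<subseteq> Lset n" by (auto simp: cc_def)

lemma finite_Lset: "finite (Lset n)"
  using finite_permutations[of "{1..n}"] by (rule finite_subset[rotated]) (auto simp: Lset_def)

lemma lie_expand_perm:
  assumes L: "lie_algebra_Z2 R br" and a: "\<And>i. a i \<in> carrier R" and n: "n \<ge> 1"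
    and sp: "\<sigma> permutes {1..n}"
  shows "lbracket br (map a (wd n \<sigma>)) = finsum R (\<lambda>\<tau>. lbracket br (map a (wd n \<tau>))) (cc n \<sigma>)"
proof -
  interpret lie2 R br by (rule lie2I[OF L])
  have Ec: "lbracket br (map a (wd n \<tau>)) \<in> carrier R" for \<tau>
    unfolding wd_def upt_1[OF n] list.map lbracket.simps
    by (rule foldl_closed) (use a in auto)
  show ?thesis
  proof (cases "\<sigma> \<in> Lset n")
    case True
    then show ?thesis using Ec by (simp add: cc_def finsum_insert)
  next
    case False
    have s1: "\<sigma> 1 \<noteq> 1" using False sp by (auto simp: Lset_def)
    let ?xs = "takeWhile (\<lambda>x. x \<noteq> 1) (wd n \<sigma>)" and ?ys = "tl (dropWhile (\<lambda>x. x \<noteq> 1) (wd n \<sigma>))"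
    have "lbracket br (map a (wd n \<sigma>)) = lbracket br (map a (?xs @ 1 # ?ys))"
      using split1(1)[OF sp n s1] by simp
    also have "\<dots> = finsum R (\<lambda>u. lbracket br (map a u)) (Sw n \<sigma>)"
      unfolding Sw_def using split1(2)[OF sp n s1] a by (intro expand_word) auto
    also have "\<dots> = finsum R (\<lambda>u. lbracket br (map a u)) (wd n ` cc n \<sigma>)"
      using wd_image_cc(1)[OF sp n False] by simp
    also have "\<dots> = finsum R (\<lambda>\<tau>. lbracket br (map a (wd n \<tau>))) (cc n \<sigma>)"
      using wd_image_cc(2)[OF sp n False] a n
      by (intro finsum_reindex) (auto simp: Ec)
    finally show ?thesis .
  qed
qed



lemma CC_empty: "CC n {} = {}" by (simp add: CC_def)

lemma CC_sub: "CC n T \<subseteq> Lset n" by (auto simp: CC_def)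

lemma CC_insert:
  assumes "finite T" "\<sigma> \<notin> T"
  shows "CC n (insert \<sigma> T) = sd (CC n T) (cc n \<sigma>)"
proof (rule Set.set_eqI)
  fix \<tau>
  have fin: "finite {s\<in>T. \<tau> \<in> cc n s}" using assms by simp
  have c: "card {s\<in>insert \<sigma> T. \<tau> \<in> cc n s} = (if \<tau> \<in> cc n \<sigma> then Suc (card {s\<in>T. \<tau> \<in> cc n s}) else card {s\<in>T. \<tau> \<in> cc n s})"
  proof -
    have "{s\<in>insert \<sigma> T. \<tau> \<in> cc n s} = (if \<tau> \<in> cc n \<sigma> then insert \<sigma> {s\<in>T. \<tau> \<in> cc n s} else {s\<in>T. \<tau> \<in> cc n s})"
      by auto
    then show ?thesis using fin assms by simp
  qed
  show "\<tau> \<in> CC n (insert \<sigma> T) \<longleftrightarrow> \<tau> \<in> sd (CC n T) (cc n \<sigma>)"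
    unfolding mem_sd CC_def mem_Collect_eq c using cc_sub[of n \<sigma>] by auto
qed

lemma sum_CC:
  assumes L: "lie_algebra_Z2 R br" and a: "\<And>i. a i \<in> carrier R" and n: "n \<ge> 1"
  shows "finite T \<Longrightarrow> T \<subseteq> {\<sigma>. \<sigma> permutes {1..n}} \<Longrightarrow>
    finsum R (\<lambda>\<tau>. lbracket br (map a (wd n \<tau>))) T = finsum R (\<lambda>\<tau>. lbracket br (map a (wd n \<tau>))) (CC n T)"
proof (induction T rule: finite_induct)
  interpret lie2 R br by (rule lie2I[OF L])
  case empty then show ?case by (simp add: CC_empty)
next
  interpret lie2 R br by (rule lie2I[OF L])
  case (insert \<sigma> T)
  let ?E = "\<lambda>\<tau>. lbracket br (map a (wd n \<tau>))"
  have Ec: "?E \<tau> \<in> carrier R" for \<tau>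
    unfolding wd_def upt_1[OF n] list.map lbracket.simps
    by (rule foldl_closed) (use a in auto)
  have fCC: "finite (CC n T)" by (rule finite_subset[OF CC_sub finite_Lset])
  have fcc: "finite (cc n \<sigma>)" by (rule finite_subset[OF cc_sub finite_Lset])
  have "finsum R ?E (insert \<sigma> T) = ?E \<sigma> \<oplus>\<^bsub>R\<^esub> finsum R ?E T"
    using insert.hyps Ec by (simp add: finsum_insert)
  also have "?E \<sigma> = finsum R ?E (cc n \<sigma>)"
    using insert.prems n a by (intro lie_expand_perm[OF L]) auto
  also have "finsum R ?E T = finsum R ?E (CC n T)" using insert by simp
  also have "finsum R ?E (cc n \<sigma>) \<oplus>\<^bsub>R\<^esub> finsum R ?E (CC n T) = finsum R ?E (sd (CC n T) (cc n \<sigma>))"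
    using fCC fcc Ec by (simp add: finsum_sd a_comm finsum_closed)
  also have "\<dots> = finsum R ?E (CC n (insert \<sigma> T))" using insert.hyps by (simp add: CC_insert)
  finally show ?case .
qed

lemma finite_P: "finite {\<sigma>. \<sigma> permutes {1..(n::nat)}}" by (rule finite_permutations) simp

lemma jacobi_iff:
  assumes n: "n \<ge> 2"
  shows "two_jacobi n T \<longleftrightarrow> T \<subseteq> {\<sigma>. \<sigma> permutes {1..n}} \<and> CC n T = {}"
proof -
  have n1: "n \<ge> 1" using n by simp
  have conv: "finsum R (\<lambda>\<sigma>. lbracket br (map (\<lambda>i. a (\<sigma> i)) [1..<n+1])) S =
              finsum R (\<lambda>\<tau>. lbracket br (map (\<lambda>i. if i \<in> {1..n} then a i else \<zero>\<^bsub>R\<^esub>) (wd n \<tau>))) S"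
    if L: "lie_algebra_Z2 R br" and a: "\<forall>i\<in>{1..n}. a i \<in> carrier R"
      and S: "S \<subseteq> {\<sigma>. \<sigma> permutes {1..n}}"
    for R :: "'x ring" and br a S
  proof -
    interpret lie2 R br by (rule lie2I[OF L])
    let ?a = "\<lambda>i. if i \<in> {1..n} then a i else \<zero>\<^bsub>R\<^esub>"
    have ac: "?a i \<in> carrier R" for i using a by auto
    have Ec: "lbracket br (map ?a (wd n \<tau>)) \<in> carrier R" for \<tau>
      unfolding wd_def upt_1[OF n1] list.map lbracket.simps
      by (rule foldl_closed[OF ac]) (unfold set_map image_subset_iff, use ac in blast)
    have eq: "map (\<lambda>i. a (\<sigma> i)) [1..<n+1] = map ?a (wd n \<sigma>)" if "\<sigma> \<in> S" for \<sigma>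
    proof -
      have p: "\<sigma> permutes {1..n}" using that S by auto
      have "\<forall>i\<in>set [1..<n+1]. a (\<sigma> i) = ?a (\<sigma> i)"
      proof
        fix i assume "i \<in> set [1..<n+1]"
        then have "i \<in> {1..n}" by (simp del: upt_Suc)
        then have "\<sigma> i \<in> {1..n}" using permutes_in_image[OF p, of i] by simp
        then show "a (\<sigma> i) = ?a (\<sigma> i)" by simp
      qed
      then show ?thesis unfolding wd_def by simp
    qed
    show ?thesis
    proof (rule finsum_cong')
      show "(\<lambda>\<tau>. lbracket br (map ?a (wd n \<tau>))) \<in> S \<rightarrow> carrier R" using Ec by blast
      show "\<And>\<sigma>. \<sigma> \<in> S \<Longrightarrow> lbracket br (map (\<lambda>i. a (\<sigma> i)) [1..<n+1]) = lbracket br (map ?a (wd n \<sigma>))"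
        using eq by simp
    qed simp
  qed
  show ?thesis
  proof
    assume J: "two_jacobi n T"
    then have TP: "T \<subseteq> {\<sigma>. \<sigma> permutes {1..n}}" by (simp add: two_jacobi_def)
    have finT: "finite T" using finite_subset[OF TP finite_P] .
    have "CC n T = {}"
    proof (rule ccontr)
      assume ne: "CC n T \<noteq> {}"
      obtain R :: "nat ring" and br a where L: "lie_algebra_Z2 R br" and a: "\<forall>i\<in>{1..n}. a i \<in> carrier R"
        and ind: "\<forall>D. D \<subseteq> Lset n \<longrightarrow> D \<noteq> {} \<longrightarrow>
          finsum R (\<lambda>\<tau>. lbracket br (map (\<lambda>i. a (\<tau> i)) [1..<n+1])) D \<noteq> \<zero>\<^bsub>R\<^esub>"
        using model[OF n] by blast
      let ?a = "\<lambda>i. if i \<in> {1..n} then a i else \<zero>\<^bsub>R\<^esub>"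
      interpret lie2 R br by (rule lie2I[OF L])
      have ac: "?a i \<in> carrier R" for i using a by auto
      have CP: "CC n T \<subseteq> {\<sigma>. \<sigma> permutes {1..n}}" using CC_sub by (auto simp: Lset_def)
      have "finsum R (\<lambda>\<tau>. lbracket br (map (\<lambda>i. a (\<tau> i)) [1..<n+1])) T = \<zero>\<^bsub>R\<^esub>"
      proof -
        have J': "\<forall>(R :: nat ring) br. lie_algebra_Z2 R br \<longrightarrow>
          (\<forall>a. (\<forall>i\<in>{1..n}. a i \<in> carrier R) \<longrightarrow>
           finsum R (\<lambda>\<sigma>. lbracket br (map (\<lambda>i. a (\<sigma> i)) [1..<n+1])) T = \<zero>\<^bsub>R\<^esub>)"
          using J unfolding two_jacobi_def by (elim conjE)
        show ?thesis using J' L a by blast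
      qed
      then have "finsum R (\<lambda>\<tau>. lbracket br (map ?a (wd n \<tau>))) T = \<zero>\<^bsub>R\<^esub>"
        using conv[OF L a TP] by simp
      then have "finsum R (\<lambda>\<tau>. lbracket br (map ?a (wd n \<tau>))) (CC n T) = \<zero>\<^bsub>R\<^esub>"
        using sum_CC[OF L ac n1 finT TP] by simp
      then have "finsum R (\<lambda>\<tau>. lbracket br (map (\<lambda>i. a (\<tau> i)) [1..<n+1])) (CC n T) = \<zero>\<^bsub>R\<^esub>"
        using conv[OF L a CP] by simp
      then show False using ind CC_sub ne by blast
    qed
    then show "T \<subseteq> {\<sigma>. \<sigma> permutes {1..n}} \<and> CC n T = {}" using TP by simp
  next
    assume A: "T \<subseteq> {\<sigma>. \<sigma> permutes {1..n}} \<and> CC n T = {}"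
    then have TP: "T \<subseteq> {\<sigma>. \<sigma> permutes {1..n}}" and C0: "CC n T = {}" by auto
    have finT: "finite T" using finite_subset[OF TP finite_P] .
    show "two_jacobi n T" unfolding two_jacobi_def
    proof (intro conjI TP allI impI)
      fix R :: "nat ring" and br a assume L: "lie_algebra_Z2 R br" and a: "\<forall>i\<in>{1..n}. a i \<in> carrier R"
      interpret lie2 R br by (rule lie2I[OF L])
      let ?a = "\<lambda>i. if i \<in> {1..n} then a i else \<zero>\<^bsub>R\<^esub>"
      have ac: "?a i \<in> carrier R" for i using a by auto
      have "finsum R (\<lambda>\<sigma>. lbracket br (map (\<lambda>i. a (\<sigma> i)) [1..<n+1])) T =
            finsum R (\<lambda>\<tau>. lbracket br (map ?a (wd n \<tau>))) T" using conv[OF L a TP] .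
      also have "\<dots> = finsum R (\<lambda>\<tau>. lbracket br (map ?a (wd n \<tau>))) (CC n T)"
        using sum_CC[OF L ac n1 finT TP] .
      also have "\<dots> = \<zero>\<^bsub>R\<^esub>" using C0 by simp
      finally show "finsum R (\<lambda>\<sigma>. lbracket br (map (\<lambda>i. a (\<sigma> i)) [1..<n+1])) T = \<zero>\<^bsub>R\<^esub>" .
    qed
  qed
qed



lemma cc_L: "\<sigma> \<in> Lset n \<Longrightarrow> cc n \<sigma> = {\<sigma>}" by (simp add: cc_def)

lemma CC_union:
  assumes A: "A \<subseteq> {\<sigma>. \<sigma> permutes {1..n}} - Lset n" and B: "B \<subseteq> Lset n" and fA: "finite A"
  shows "CC n (A \<union> B) = sd (CC n A) B"
proof (rule Set.set_eqI)
  fix \<tau>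
  have e: "{s\<in>A \<union> B. \<tau> \<in> cc n s} = {s\<in>A. \<tau> \<in> cc n s} \<union> (if \<tau> \<in> B then {\<tau>} else {})"
    using B cc_L by auto
  have d: "\<tau> \<in> B \<Longrightarrow> \<tau> \<notin> {s\<in>A. \<tau> \<in> cc n s}" using A B by auto
  have fin: "finite {s\<in>A. \<tau> \<in> cc n s}" using fA by simp
  have c: "card {s\<in>A \<union> B. \<tau> \<in> cc n s} = (if \<tau> \<in> B then Suc (card {s\<in>A. \<tau> \<in> cc n s}) else card {s\<in>A. \<tau> \<in> cc n s})"
    unfolding e using fin d by simp
  show "\<tau> \<in> CC n (A \<union> B) \<longleftrightarrow> \<tau> \<in> sd (CC n A) B"
    unfolding mem_sd CC_def mem_Collect_eq c using B by auto
qed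

lemma card_Lset: "n \<ge> 1 \<Longrightarrow> card (Lset n) = fact (n - 1)"
proof -
  assume n: "n \<ge> 1"
  have "Lset n = {\<sigma>. \<sigma> permutes {2..n}}"
  proof (rule Set.set_eqI, rule iffI)
    fix \<sigma> assume "\<sigma> \<in> Lset n"
    then have p: "\<sigma> permutes {1..n}" and s1: "\<sigma> 1 = 1" by (auto simp: Lset_def)
    have "(\<forall>x. x \<notin> {2..n} \<longrightarrow> \<sigma> x = x)"
    proof (intro allI impI)
      fix x assume "x \<notin> {2..n}"
      then have "x = 1 \<or> x \<notin> {1..n}" by auto
      then show "\<sigma> x = x" using s1 permutes_not_in[OF p] by auto
    qed
    moreover have "\<forall>y. \<exists>!x. \<sigma> x = y" using p by (simp add: permutes_def)
    ultimately show "\<sigma> \<in> {\<sigma>. \<sigma> permutes {2..n}}" by (simp add: permutes_def)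
  next
    fix \<sigma> assume "\<sigma> \<in> {\<sigma>. \<sigma> permutes {2..n}}"
    then have p: "\<sigma> permutes {2..n}" by simp
    have "\<sigma> permutes {1..n}" by (rule permutes_subset[OF p]) auto
    moreover have "\<sigma> 1 = 1" using permutes_not_in[OF p] by simp
    ultimately show "\<sigma> \<in> Lset n" by (simp add: Lset_def)
  qed
  moreover have "card {2..n} = n - 1" by simp
  ultimately show ?thesis using card_permutations[of "{2..n}" "n - 1"] by simp
qed

lemma count_main:
  assumes n: "n \<ge> 2"
  shows "card {T. two_jacobi n T} = 2 ^ (fact (n - 1) * (n - 1))"
proof -
  let ?P = "{\<sigma>. \<sigma> permutes {1..n}}" and ?L = "Lset n"
  have n1: "n \<ge> 1" using n by simp
  have LP: "?L \<subseteq> ?P" by (auto simp: Lset_def)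
  have J: "{T. two_jacobi n T} = {T. T \<subseteq> ?P \<and> CC n T = {}}" using jacobi_iff[OF n] by blast
  have fPL: "finite (?P - ?L)" using finite_P by simp
  have img: "{T. T \<subseteq> ?P \<and> CC n T = {}} = (\<lambda>A. A \<union> CC n A) ` Pow (?P - ?L)"
  proof (rule Set.set_eqI, rule iffI)
    fix T assume "T \<in> {T. T \<subseteq> ?P \<and> CC n T = {}}"
    then have TP: "T \<subseteq> ?P" and C0: "CC n T = {}" by auto
    let ?A = "T - ?L" and ?B = "T \<inter> ?L"
    have fA: "finite ?A" using finite_subset[OF _ fPL] TP by blast
    have "CC n (?A \<union> ?B) = sd (CC n ?A) ?B" by (rule CC_union) (use TP fA in auto)
    moreover have "?A \<union> ?B = T" by blast
    ultimately have "sd (CC n ?A) ?B = {}" using C0 by simp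
    then have "?B = CC n ?A" by (auto simp: sd_def)
    then have "T = ?A \<union> CC n ?A" by blast
    moreover have "?A \<in> Pow (?P - ?L)" using TP by auto
    ultimately show "T \<in> (\<lambda>A. A \<union> CC n A) ` Pow (?P - ?L)" by blast
  next
    fix T assume "T \<in> (\<lambda>A. A \<union> CC n A) ` Pow (?P - ?L)"
    then obtain A where A: "A \<subseteq> ?P - ?L" and T: "T = A \<union> CC n A" by blast
    have fA: "finite A" using finite_subset[OF A fPL] .
    have "CC n T = sd (CC n A) (CC n A)" unfolding T by (rule CC_union[OF A CC_sub fA])
    then have "CC n T = {}" by (simp add: sd_same)
    moreover have "T \<subseteq> ?P" using A CC_sub[of n A] LP T by blast
    ultimately show "T \<in> {T. T \<subseteq> ?P \<and> CC n T = {}}" by simp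
  qed
  have inj: "inj_on (\<lambda>A. A \<union> CC n A) (Pow (?P - ?L))"
  proof (rule inj_onI)
    fix A B assume A: "A \<in> Pow (?P - ?L)" and B: "B \<in> Pow (?P - ?L)" and e: "A \<union> CC n A = B \<union> CC n B"
    have "A = (A \<union> CC n A) - ?L" using A CC_sub[of n A] by blast
    also have "\<dots> = (B \<union> CC n B) - ?L" using e by simp
    also have "\<dots> = B" using B CC_sub[of n B] by blast
    finally show "A = B" .
  qed
  have "card {T. two_jacobi n T} = card (Pow (?P - ?L))" unfolding J img using card_image[OF inj] .
  also have "\<dots> = 2 ^ card (?P - ?L)" using card_Pow[OF fPL] .
  also have "card (?P - ?L) = card ?P - card ?L" using card_Diff_subset[OF finite_Lset LP] .
  also have "card ?P = fact n" using card_permutations[of "{1..n}" n] by simp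
  also have "card ?L = fact (n - 1)" using card_Lset[OF n1] .
  also have "fact n - fact (n - 1) = fact (n - 1) * (n - 1)"
  proof -
    obtain m where m: "n = Suc m" using n1 by (cases n) auto
    show ?thesis unfolding m by (simp add: algebra_simps)
  qed
  finally show ?thesis .
qed

theorem corollary2:
  fixes n :: nat
  assumes "n \<ge> 2"
  shows "card {T. two_jacobi n T} = 2 ^ (fact (n - 1) * (n - 1))"
  using count_main[OF assms] .


end
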